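(* Let $G$ be a graph and $r$ a positive integer, and assume $G$ has a pair of vertices at distance between $2$ and $r$. For a choice of non-negative reals $y_{uv}$, one for each unordered pair $\{u,v\}$ of vertices at distance between $2$ and $r$ in $G$ (not all zero), set $x_u=\max_{z:uz\in E(G)}\sum_{v\in R_r(u,z)}y_{uv}$ for each $u\in V(G)$, and let $c$ be the maximum, over all such choices, of $\frac{\sum_{\{u,v\}:2\le d_G(u,v)\le r}y_{uv}}{\sum_{v\in V(G)}x_v}$. Then every fractional $r$-guidance system and every weak $r$-guidance system of $G$ has maximum outdegree at least $c$.
   Context: All graphs are finite, simple and undirected; $d_G$ is the distance in $G$. For $u,v$ at distance $\ell$, $\Gamma_G(u,v)$ is the set of neighbors of $u$ at distance $\ell-1$ from $v$. For an edge $uz$, $R_r(u,z)$ is the set of vertices $v$ with $2\le d_G(u,v)\le r$ and $z\in\Gamma_G(u,v)$. A partial orientation of $G$ is a directed graph $\vec{H}$ on $V(G)$ with every $(u,v)\in E(\vec{H})$ satisfying $uv\in E(G)$. $B_{\vec{H}}(v,a)$ is the set of vertices reachable from $v$ by a directed path of length at most $a$. A weak $r$-guidance system is a partial orientation $\vec{H}$ such that for any distinct $u,v$ at distance $\ell\le r$ there exist non-negative integers $a,b$ with $a+b=\ell-1$ such that $G$ has an edge between $B_{\vec{H}}(u,a)$ and $B_{\vec{H}}(v,b)$. A fractional orientation assigns a non-negative real $p(u,v)$ to each ordered pair of adjacent vertices; its maximum outdegree is $\max_u\sum_{v:uv\in E(G)}p(u,v)$. A fractional $r$-guidance system is a fractional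 orientation with $\sum_{y\in\Gamma_G(u,v)}p(u,y)+\sum_{y\in\Gamma_G(v,u)}p(v,y)\ge1$ for all $u,v$ with $2\le d_G(u,v)\le r$. *)

theory Defs
  imports Complex_Main "HOL-Library.Extended_Nat"
begin

definition sgraph :: "'a set \<Rightarrow> 'a set set \<Rightarrow> bool" where
  "sgraph V E \<longleftrightarrow> finite V \<and> (\<forall>e\<in>E. \<exists>u v. e = {u, v} \<and> u \<noteq> v \<and> u \<in> V \<and> v \<in> V)"

inductive walk_len :: "'a set set \<Rightarrow> nat \<Rightarrow> 'a \<Rightarrow> 'a \<Rightarrow> bool" for E where
  walk0: "walk_len E 0 u u"
| walkS: "{u, w} \<in> E \<Longrightarrow> walk_len E n w v \<Longrightarrow> walk_len E (Suc n) u v"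

text \<open>Graph distance (infinity if no walk exists).\<close>
definition gdist :: "'a set set \<Rightarrow> 'a \<Rightarrow> 'a \<Rightarrow> enat" where
  "gdist E u v = (INF n \<in> {n. walk_len E n u v}. enat n)"

definition Gamma :: "'a set set \<Rightarrow> 'a \<Rightarrow> 'a \<Rightarrow> 'a set" where
  "Gamma E u v = {y. {u, y} \<in> E \<and> eSuc (gdist E y v) = gdist E u v}"

definition Rset :: "'a set \<Rightarrow> 'a set set \<Rightarrow> nat \<Rightarrow> 'a \<Rightarrow> 'a \<Rightarrow> 'a set" where
  "Rset V E r u z = {v \<in> V. 2 \<le> gdist E u v \<and> gdist E u v \<le> enat r \<and> z \<in> Gamma E u v}"

definition far_pairs :: "'a set \<Rightarrow> 'a set set \<Rightarrow> nat \<Rightarrow> 'a set set" where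
  "far_pairs V E r = {{u, v} | u v. u \<in> V \<and> v \<in> V \<and> 2 \<le> gdist E u v \<and> gdist E u v \<le> enat r}"

text \<open>x_u = max over neighbours z of sum_{v in R_r(u,z)} y_{uv}
  (0 if u has no neighbours; all terms are non-negative).\<close>
definition xval :: "'a set \<Rightarrow> 'a set set \<Rightarrow> nat \<Rightarrow> ('a set \<Rightarrow> real) \<Rightarrow> 'a \<Rightarrow> real" where
  "xval V E r y u = Max (insert 0 {(\<Sum>v\<in>Rset V E r u z. y {u, v}) | z. z \<in> V \<and> {u, z} \<in> E})"

definition admissible_weights :: "'a set \<Rightarrow> 'a set set \<Rightarrow> nat \<Rightarrow> ('a set \<Rightarrow> real) \<Rightarrow> bool" where
  "admissible_weights V E r y \<longleftrightarrow> (\<forall>p\<in>far_pairs V E r. 0 \<le> y p) \<and> (\<exists>p\<in>far_pairs V E r. y p \<noteq> 0)"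

definition weight_ratio :: "'a set \<Rightarrow> 'a set set \<Rightarrow> nat \<Rightarrow> ('a set \<Rightarrow> real) \<Rightarrow> real" where
  "weight_ratio V E r y = (\<Sum>p\<in>far_pairs V E r. y p) / (\<Sum>v\<in>V. xval V E r y v)"

definition cval :: "'a set \<Rightarrow> 'a set set \<Rightarrow> nat \<Rightarrow> real" where
  "cval V E r = Sup {weight_ratio V E r y | y. admissible_weights V E r y}"

definition frac_orientation :: "'a set \<Rightarrow> 'a set set \<Rightarrow> ('a \<Rightarrow> 'a \<Rightarrow> real) \<Rightarrow> bool" where
  "frac_orientation V E p \<longleftrightarrow> (\<forall>u\<in>V. \<forall>v\<in>V. {u, v} \<in> E \<longrightarrow> 0 \<le> p u v)"

definition frac_max_outdeg :: "'a set \<Rightarrow> 'a set set \<Rightarrow> ('a \<Rightarrow> 'a \<Rightarrow> real) \<Rightarrow> real" where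
  "frac_max_outdeg V E p = Max ((\<lambda>u. \<Sum>v\<in>{v\<in>V. {u, v} \<in> E}. p u v) ` V)"

definition frac_guidance :: "'a set \<Rightarrow> 'a set set \<Rightarrow> nat \<Rightarrow> ('a \<Rightarrow> 'a \<Rightarrow> real) \<Rightarrow> bool" where
  "frac_guidance V E r p \<longleftrightarrow> frac_orientation V E p \<and>
     (\<forall>u\<in>V. \<forall>v\<in>V. 2 \<le> gdist E u v \<and> gdist E u v \<le> enat r \<longrightarrow>
        (\<Sum>y\<in>Gamma E u v. p u y) + (\<Sum>y\<in>Gamma E v u. p v y) \<ge> 1)"

definition partial_orientation :: "'a set \<Rightarrow> 'a set set \<Rightarrow> ('a \<times> 'a) set \<Rightarrow> bool" where
  "partial_orientation V E H \<longleftrightarrow> H \<subseteq> {(u, v). u \<in> V \<and> v \<in> V \<and> {u, v} \<in> E}"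

definition Bout :: "('a \<times> 'a) set \<Rightarrow> 'a \<Rightarrow> nat \<Rightarrow> 'a set" where
  "Bout H v a = {w. \<exists>n\<le>a. (v, w) \<in> H ^^ n}"

definition weak_guidance :: "'a set \<Rightarrow> 'a set set \<Rightarrow> nat \<Rightarrow> ('a \<times> 'a) set \<Rightarrow> bool" where
  "weak_guidance V E r H \<longleftrightarrow> partial_orientation V E H \<and>
     (\<forall>u\<in>V. \<forall>v\<in>V. \<forall>l. u \<noteq> v \<and> gdist E u v = enat l \<and> l \<le> r \<longrightarrow>
        (\<exists>a b. a + b = l - 1 \<and> (\<exists>x\<in>Bout H u a. \<exists>w\<in>Bout H v b. {x, w} \<in> E)))"

definition max_outdeg :: "'a set \<Rightarrow> ('a \<times> 'a) set \<Rightarrow> nat" where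
  "max_outdeg V H = Max ((\<lambda>u. card {v. (u, v) \<in> H}) ` V)"

end

theory Submission
  imports Defs
begin

lemma walk_snoc: "walk_len E n u w \<Longrightarrow> {w, v} \<in> E \<Longrightarrow> walk_len E (Suc n) u v"
proof (induction rule: walk_len.induct)
  case (walk0 u)
  then show ?case by (auto intro: walk_len.intros)
next
  case (walkS u w n x)
  then show ?case by (auto intro: walk_len.intros)
qed

lemma walk_rev: "walk_len E n u v \<Longrightarrow> walk_len E n v u"
proof (induction rule: walk_len.induct)
  case (walk0 u)
  then show ?case by (auto intro: walk_len.intros)
next
  case (walkS u w n v)
  then show ?case by (metis insert_commute walk_snoc)
qed

lemma walk_app: "walk_len E n u w \<Longrightarrow> walk_len E m w v \<Longrightarrow> walk_len E (n + m) u v"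
  by (induction rule: walk_len.induct) (auto intro: walk_len.intros)

lemma gdist_le: "walk_len E n u v \<Longrightarrow> gdist E u v \<le> enat n"
  unfolding gdist_def by (rule INF_lower2) auto

lemma gdist_walk: assumes "gdist E u v = enat l" shows "walk_len E l u v"
proof -
  have ne: "{n. walk_len E n u v} \<noteq> {}"
  proof
    assume "{n. walk_len E n u v} = {}"
    then have "gdist E u v = top" unfolding gdist_def by simp
    with assms show False by (simp add: top_enat_def)
  qed
  then obtain n where n: "walk_len E n u v" by auto
  define n0 where "n0 = (LEAST n. walk_len E n u v)"
  have w0: "walk_len E n0 u v" unfolding n0_def using n by (rule LeastI)
  have "gdist E u v = enat n0"
  proof (rule antisym)
    show "gdist E u v \<le> enat n0" using w0 by (rule gdist_le)
    show "enat n0 \<le> gdist E u v" unfolding gdist_def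
      by (rule INF_greatest) (simp add: n0_def Least_le)
  qed
  with assms w0 show ?thesis by simp
qed

lemma gdist_sym: "gdist E u v = gdist E v u"
  unfolding gdist_def using walk_rev by metis

lemma gdist_self: "gdist E u u = 0"
  using gdist_le[OF walk_len.walk0[of E u]] by (simp add: zero_enat_def[symmetric])

lemma edge_V: "sgraph V E \<Longrightarrow> {u, y} \<in> E \<Longrightarrow> y \<in> V \<and> u \<in> V"
  unfolding sgraph_def by (metis doubleton_eq_iff)

lemma Gamma_intro:
  assumes "{u, y} \<in> E" "gdist E u v = enat l" "walk_len E k y v" "Suc k \<le> l"
  shows "y \<in> Gamma E u v"
proof -
  have "gdist E y v \<le> enat k" using assms(3) by (rule gdist_le)
  then obtain k' where k': "gdist E y v = enat k'" using enat_ile by blast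
  with \<open>gdist E y v \<le> enat k\<close> have "k' \<le> k" by simp
  have "walk_len E k' y v" using k' by (rule gdist_walk)
  then have "walk_len E (Suc k') u v" using assms(1) by (blast intro: walkS)
  then have "enat l \<le> enat (Suc k')" using assms(2) gdist_le by metis
  then have "Suc k' = l" using \<open>k' \<le> k\<close> assms(4) by simp
  then show ?thesis unfolding Gamma_def using assms(1,2) k' by (simp add: eSuc_enat)
qed

lemma xval_ge:
  assumes G: "sgraph V E" and z: "z \<in> V" "{u, z} \<in> E"
  shows "(\<Sum>v\<in>Rset V E r u z. y {u, v}) \<le> xval V E r y u"
proof -
  have fin: "finite V" using G by (simp add: sgraph_def)
  have "finite {(\<Sum>v\<in>Rset V E r u z. y {u, v}) | z. z \<in> V \<and> {u, z} \<in> E}"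
    using fin by (simp add: finite_image_set)
  then show ?thesis unfolding xval_def by (rule Max_ge[OF finite_insert[THEN iffD2]]) (use z in auto)
qed

lemma xval_nonneg:
  assumes G: "sgraph V E" shows "0 \<le> xval V E r y u"
proof -
  have fin: "finite V" using G by (simp add: sgraph_def)
  have "finite {(\<Sum>v\<in>Rset V E r u z. y {u, v}) | z. z \<in> V \<and> {u, z} \<in> E}"
    using fin by (simp add: finite_image_set)
  then show ?thesis unfolding xval_def by (rule Max_ge[OF finite_insert[THEN iffD2]]) auto
qed

lemma key_ineq:
  assumes G: "sgraph V E"
   and pnn: "\<And>u v. u\<in>V \<Longrightarrow> v\<in>V \<Longrightarrow> {u,v}\<in>E \<Longrightarrow> 0 \<le> p u v"
   and cover: "\<And>u v. u\<in>V \<Longrightarrow> v\<in>V \<Longrightarrow> 2 \<le> gdist E u v \<Longrightarrow> gdist E u v \<le> enat r \<Longrightarrow>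
        (\<Sum>y\<in>Gamma E u v. p u y) + (\<Sum>y\<in>Gamma E v u. p v y) \<ge> 1"
   and deg: "\<And>u. u\<in>V \<Longrightarrow> (\<Sum>v\<in>{v\<in>V. {u,v}\<in>E}. p u v) \<le> D" and D0: "0 \<le> D"
   and ynn: "\<And>q. q \<in> far_pairs V E r \<Longrightarrow> 0 \<le> y q"
  shows "(\<Sum>q\<in>far_pairs V E r. y q) \<le> D * (\<Sum>v\<in>V. xval V E r y v)"
proof -
  have fin: "finite V" using G by (simp add: sgraph_def)
  define cond where "cond u v \<longleftrightarrow> 2 \<le> gdist E u v \<and> gdist E u v \<le> enat r" for u v
  define A where "A u v = (\<Sum>z\<in>Gamma E u v. p u z)" for u v
  define N where "N u = {z\<in>V. {u,z}\<in>E}" for u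
  define OP where "OP = (SIGMA u:V. {v\<in>V. cond u v})"
  define f :: "'a \<times> 'a \<Rightarrow> 'a set" where "f = (\<lambda>(u,v). {u,v})"
  define g where "g = (\<lambda>(u,v). y {u,v} * A u v)"
  have condsym: "cond u v = cond v u" for u v unfolding cond_def using gdist_sym by metis
  have condne: "cond u v \<Longrightarrow> u \<noteq> v" for u v
  proof
    assume "cond u v" "u = v"
    then have "(2::enat) \<le> 0" unfolding cond_def using gdist_self[of E u] by simp
    then show False by (simp add: zero_enat_def numeral_eq_enat)
  qed
  have finOP: "finite OP" unfolding OP_def using fin by auto
  have FP: "far_pairs V E r = f ` OP"
  proof (rule equalityI; rule subsetI)
    fix q assume "q \<in> far_pairs V E r"
    then obtain u v where "q = {u,v}" "u \<in> V" "v \<in> V" "cond u v"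
      unfolding far_pairs_def cond_def by blast
    then show "q \<in> f ` OP" unfolding OP_def f_def by force
  next
    fix q assume "q \<in> f ` OP"
    then obtain u v where "q = {u,v}" "u \<in> V" "v \<in> V" "cond u v"
      unfolding OP_def f_def by force
    then show "q \<in> far_pairs V E r" unfolding far_pairs_def cond_def by blast
  qed
  have GN: "Gamma E u v \<subseteq> N u" for u v
    unfolding Gamma_def N_def using edge_V[OF G] by auto
  have step1: "(\<Sum>q\<in>far_pairs V E r. y q) \<le> (\<Sum>x\<in>OP. g x)"
  proof -
    have "(\<Sum>x\<in>OP. g x) = (\<Sum>q\<in>f ` OP. \<Sum>x\<in>{x. x \<in> OP \<and> f x = q}. g x)"
      using finOP by (rule sum.image_gen)
    also have "\<dots> \<ge> (\<Sum>q\<in>f ` OP. y q)"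
    proof (rule sum_mono)
      fix q assume q: "q \<in> f ` OP"
      then obtain a b where ab: "(a,b) \<in> OP" "q = {a,b}" unfolding f_def by auto
      have ba: "(b,a) \<in> OP" using ab condsym unfolding OP_def by auto
      have neq: "a \<noteq> b" using ab condne unfolding OP_def by auto
      have eq: "{x. x \<in> OP \<and> f x = q} = {(a,b),(b,a)}"
      proof (rule equalityI; rule subsetI)
        fix x assume "x \<in> {x. x \<in> OP \<and> f x = q}"
        then obtain c d where "x = (c,d)" "{c,d} = {a,b}" unfolding f_def ab(2) by (cases x) auto
        then show "x \<in> {(a,b),(b,a)}" by (auto simp: doubleton_eq_iff)
      next
        fix x assume "x \<in> {(a,b),(b,a)}"
        then show "x \<in> {x. x \<in> OP \<and> f x = q}" using ab ba unfolding f_def by (auto simp: insert_commute)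
      qed
      have "(\<Sum>x\<in>{x. x \<in> OP \<and> f x = q}. g x) = y q * (A a b + A b a)"
        using neq unfolding eq by (simp add: g_def ab(2) insert_commute algebra_simps)
      moreover have "A a b + A b a \<ge> 1" using ab cover unfolding OP_def cond_def A_def by auto
      moreover have "0 \<le> y q" using ynn q FP by auto
      ultimately show "y q \<le> (\<Sum>x\<in>{x. x \<in> OP \<and> f x = q}. g x)"
        by (metis mult_left_mono mult.right_neutral)
    qed
    finally show ?thesis using FP by simp
  qed
  have step2: "(\<Sum>x\<in>OP. g x) = (\<Sum>u\<in>V. \<Sum>v\<in>{v\<in>V. cond u v}. y {u,v} * A u v)"
    unfolding OP_def g_def using fin by (subst sum.Sigma) auto
  have step3: "(\<Sum>v\<in>{v\<in>V. cond u v}. y {u,v} * A u v) \<le> xval V E r y u * D"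
    if u: "u \<in> V" for u
  proof -
    have finN: "finite (N u)" unfolding N_def using fin by auto
    have finC: "finite {v\<in>V. cond u v}" using fin by auto
    have "(\<Sum>v\<in>{v\<in>V. cond u v}. y {u,v} * A u v)
       = (\<Sum>v\<in>{v\<in>V. cond u v}. \<Sum>z\<in>N u. if z \<in> Gamma E u v then y {u,v} * p u z else 0)"
    proof (rule sum.cong[OF refl])
      fix v
      have "Gamma E u v = {z \<in> N u. z \<in> Gamma E u v}" using GN by auto
      then have "A u v = (\<Sum>z\<in>{z \<in> N u. z \<in> Gamma E u v}. p u z)" unfolding A_def by simp
      also have "\<dots> = (\<Sum>z\<in>N u. if z \<in> Gamma E u v then p u z else 0)"
        using finN by (rule sum.inter_filter)
      finally show "y {u,v} * A u v = (\<Sum>z\<in>N u. if z \<in> Gamma E u v then y {u,v} * p u z else 0)"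
        by (simp add: sum_distrib_left if_distrib cong: if_cong)
    qed
    also have "\<dots> = (\<Sum>z\<in>N u. \<Sum>v\<in>{v\<in>V. cond u v}. if z \<in> Gamma E u v then y {u,v} * p u z else 0)"
      by (rule sum.swap)
    also have "\<dots> = (\<Sum>z\<in>N u. p u z * (\<Sum>v\<in>Rset V E r u z. y {u,v}))"
    proof (rule sum.cong[OF refl])
      fix z
      have R: "Rset V E r u z = {v \<in> {v\<in>V. cond u v}. z \<in> Gamma E u v}"
        unfolding Rset_def cond_def by auto
      show "(\<Sum>v\<in>{v\<in>V. cond u v}. if z \<in> Gamma E u v then y {u,v} * p u z else 0)
          = p u z * (\<Sum>v\<in>Rset V E r u z. y {u,v})"
        unfolding R sum.inter_filter[OF finC] by (auto simp: sum_distrib_left intro!: sum.cong)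
    qed
    also have "\<dots> \<le> (\<Sum>z\<in>N u. p u z * xval V E r y u)"
    proof (rule sum_mono)
      fix z assume z: "z \<in> N u"
      then show "p u z * (\<Sum>v\<in>Rset V E r u z. y {u,v}) \<le> p u z * xval V E r y u"
        using pnn[OF u] xval_ge[OF G] unfolding N_def by (auto intro: mult_left_mono)
    qed
    also have "\<dots> = xval V E r y u * (\<Sum>z\<in>N u. p u z)"
      by (simp add: sum_distrib_right mult.commute)
    also have "\<dots> \<le> xval V E r y u * D"
      using deg[OF u] xval_nonneg[OF G] unfolding N_def by (auto intro: mult_left_mono)
    finally show ?thesis .
  qed
  have "(\<Sum>u\<in>V. \<Sum>v\<in>{v\<in>V. cond u v}. y {u,v} * A u v) \<le> (\<Sum>u\<in>V. xval V E r y u * D)"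
    using step3 by (rule sum_mono)
  then have "(\<Sum>q\<in>far_pairs V E r. y q) \<le> (\<Sum>u\<in>V. xval V E r y u * D)"
    using step1 step2 by linarith
  then show ?thesis by (simp add: sum_distrib_left mult.commute)
qed


lemma cval_bound:
  assumes G: "sgraph V E" and ne: "far_pairs V E r \<noteq> {}"
   and pnn: "\<And>u v. u\<in>V \<Longrightarrow> v\<in>V \<Longrightarrow> {u,v}\<in>E \<Longrightarrow> 0 \<le> p u v"
   and cover: "\<And>u v. u\<in>V \<Longrightarrow> v\<in>V \<Longrightarrow> 2 \<le> gdist E u v \<Longrightarrow> gdist E u v \<le> enat r \<Longrightarrow>
        (\<Sum>y\<in>Gamma E u v. p u y) + (\<Sum>y\<in>Gamma E v u. p v y) \<ge> 1"
   and deg: "\<And>u. u\<in>V \<Longrightarrow> (\<Sum>v\<in>{v\<in>V. {u,v}\<in>E}. p u v) \<le> D" and D0: "0 \<le> D"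
  shows "cval V E r \<le> D"
  unfolding cval_def
proof (rule cSup_least)
  have "admissible_weights V E r (\<lambda>_. 1)" using ne unfolding admissible_weights_def by auto
  then show "{weight_ratio V E r y |y. admissible_weights V E r y} \<noteq> {}" by blast
next
  fix t assume "t \<in> {weight_ratio V E r y |y. admissible_weights V E r y}"
  then obtain y where y: "admissible_weights V E r y" and t: "t = weight_ratio V E r y" by blast
  have S: "(\<Sum>q\<in>far_pairs V E r. y q) \<le> D * (\<Sum>v\<in>V. xval V E r y v)"
    by (rule key_ineq[OF G pnn cover deg D0]) (use y in \<open>auto simp: admissible_weights_def\<close>)
  have X: "0 \<le> (\<Sum>v\<in>V. xval V E r y v)" by (rule sum_nonneg) (rule xval_nonneg[OF G])
  show "t \<le> D"
  proof (cases "(\<Sum>v\<in>V. xval V E r y v) = 0")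
    case True then show ?thesis using D0 by (simp add: t weight_ratio_def)
  next
    case False then have "0 < (\<Sum>v\<in>V. xval V E r y v)" using X by linarith
    then show ?thesis using S by (simp add: t weight_ratio_def pos_divide_le_eq mult.commute)
  qed
qed

lemma Hwalk:
  assumes "H \<subseteq> {(u, v). u \<in> V \<and> v \<in> V \<and> {u, v} \<in> E}"
  shows "(u, x) \<in> H ^^ n \<Longrightarrow> walk_len E n u x"
proof (induction n arbitrary: u)
  case 0 then show ?case by (auto intro: walk_len.intros)
next
  case (Suc n)
  then obtain y where "(u,y) \<in> H" "(y,x) \<in> H ^^ n" using relpow_Suc_D2 by metis
  then show ?case using Suc assms by (blast intro: walkS)
qed

theorem lemma28:
  fixes V :: "'a set" and E :: "'a set set" and r :: nat
  assumes "sgraph V E" and "r \<ge> 1"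
    and "\<exists>u\<in>V. \<exists>v\<in>V. 2 \<le> gdist E u v \<and> gdist E u v \<le> enat r"
  shows "(\<forall>p. frac_guidance V E r p \<longrightarrow> frac_max_outdeg V E p \<ge> cval V E r)
       \<and> (\<forall>H. weak_guidance V E r H \<longrightarrow> real (max_outdeg V H) \<ge> cval V E r)"
proof -
  have G: "sgraph V E" by fact
  have fin: "finite V" using G by (simp add: sgraph_def)
  have ne: "far_pairs V E r \<noteq> {}" using assms(3) unfolding far_pairs_def by blast
  have Vne: "V \<noteq> {}" using assms(3) by blast
  show ?thesis
  proof (intro conjI allI impI)
    fix p assume fg: "frac_guidance V E r p"
    show "cval V E r \<le> frac_max_outdeg V E p"
    proof (rule cval_bound[OF G ne])
      show "\<And>u v. u\<in>V \<Longrightarrow> v\<in>V \<Longrightarrow> {u,v}\<in>E \<Longrightarrow> 0 \<le> p u v"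
        using fg by (auto simp: frac_guidance_def frac_orientation_def)
      show "\<And>u v. u\<in>V \<Longrightarrow> v\<in>V \<Longrightarrow> 2 \<le> gdist E u v \<Longrightarrow> gdist E u v \<le> enat r \<Longrightarrow>
        (\<Sum>y\<in>Gamma E u v. p u y) + (\<Sum>y\<in>Gamma E v u. p v y) \<ge> 1"
        using fg by (auto simp: frac_guidance_def)
      show "\<And>u. u\<in>V \<Longrightarrow> (\<Sum>v\<in>{v\<in>V. {u,v}\<in>E}. p u v) \<le> frac_max_outdeg V E p"
        unfolding frac_max_outdeg_def using fin by (auto intro: Max_ge)
      obtain u where u: "u \<in> V" using Vne by blast
      have "0 \<le> (\<Sum>v\<in>{v\<in>V. {u,v}\<in>E}. p u v)"
        using fg u by (auto simp: frac_guidance_def frac_orientation_def intro: sum_nonneg)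
      also have "\<dots> \<le> frac_max_outdeg V E p"
        unfolding frac_max_outdeg_def using fin u by (auto intro: Max_ge)
      finally show "0 \<le> frac_max_outdeg V E p" .
    qed
  next
    fix H assume wg: "weak_guidance V E r H"
    have PO: "H \<subseteq> {(u, v). u \<in> V \<and> v \<in> V \<and> {u, v} \<in> E}"
      using wg by (simp add: weak_guidance_def partial_orientation_def)
    define p where "p u v = (if (u,v) \<in> H then 1 else (0::real))" for u v
    show "cval V E r \<le> real (max_outdeg V H)"
    proof (rule cval_bound[OF G ne])
      show "\<And>u v. u\<in>V \<Longrightarrow> v\<in>V \<Longrightarrow> {u,v}\<in>E \<Longrightarrow> 0 \<le> p u v" by (simp add: p_def)
      show "0 \<le> real (max_outdeg V H)" by simp
      fix u assume u: "u \<in> V"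
      have "(\<Sum>v\<in>{v\<in>V. {u,v}\<in>E}. p u v) = real (card {v\<in>{v\<in>V. {u,v}\<in>E}. (u,v) \<in> H})"
        unfolding p_def using fin by (simp add: sum.inter_filter[symmetric])
      also have "\<dots> \<le> real (card {v. (u,v) \<in> H})"
        using fin PO by (auto intro!: card_mono intro: finite_subset)
      also have "\<dots> \<le> real (max_outdeg V H)"
        unfolding max_outdeg_def using fin u by (auto intro: Max_ge)
      finally show "(\<Sum>v\<in>{v\<in>V. {u,v}\<in>E}. p u v) \<le> real (max_outdeg V H)" .
    next
      fix u v assume u: "u \<in> V" and v: "v \<in> V" and d2: "2 \<le> gdist E u v" and dr: "gdist E u v \<le> enat r"
      obtain l where l: "gdist E u v = enat l" using dr enat_ile by blast
      have l2: "2 \<le> l" using d2 l by (simp add: numeral_eq_enat)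
      have lr: "l \<le> r" using dr l by simp
      have uv: "u \<noteq> v" using l l2 gdist_self[of E u] by (auto simp: zero_enat_def)
      obtain a b x w where ab: "a + b = l - 1" and x: "x \<in> Bout H u a" and w: "w \<in> Bout H v b"
        and xw: "{x, w} \<in> E"
        using wg u v uv l lr unfolding weak_guidance_def by blast
      obtain n1 where n1: "n1 \<le> a" "(u,x) \<in> H ^^ n1" using x unfolding Bout_def by blast
      obtain n2 where n2: "n2 \<le> b" "(v,w) \<in> H ^^ n2" using w unfolding Bout_def by blast
      have wux: "walk_len E n1 u x" using Hwalk[OF PO] n1 by blast
      have wvw: "walk_len E n2 v w" using Hwalk[OF PO] n2 by blast
      have wxv: "walk_len E (Suc n2) x v" using walkS[OF xw walk_rev[OF wvw]] .
      have "walk_len E (n1 + Suc n2) u v" using walk_app[OF wux wxv] .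
      then have "enat l \<le> enat (n1 + Suc n2)" using gdist_le l by metis
      then have eqs: "n1 = a" "n2 = b" using n1 n2 ab l2 by auto
      have sn: "0 \<le> (\<Sum>y\<in>Gamma E u v. p u y)" "0 \<le> (\<Sum>y\<in>Gamma E v u. p v y)"
        by (auto simp: p_def intro: sum_nonneg)
      have finG: "finite (Gamma E u v)" "finite (Gamma E v u)"
        using fin edge_V[OF G] unfolding Gamma_def by (auto intro: finite_subset)
      show "(\<Sum>y\<in>Gamma E u v. p u y) + (\<Sum>y\<in>Gamma E v u. p v y) \<ge> 1"
      proof (cases n1)
        case 0
        then have xu: "x = u" using n1 by simp
        have "n2 \<noteq> 0" using eqs 0 ab l2 by simp
        then obtain m where m: "n2 = Suc m" using not0_implies_Suc by blast
        then obtain y where y: "(v,y) \<in> H" "(y,w) \<in> H ^^ m" using n2 relpow_Suc_D2 by metis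
        have "walk_len E m y w" using Hwalk[OF PO] y by blast
        moreover have "walk_len E (Suc 0) w u" using xw xu by (auto intro!: walkS walk0 simp: insert_commute)
        ultimately have wyu: "walk_len E (m + Suc 0) y u" by (rule walk_app)
        have vy: "{v,y} \<in> E" using y PO by auto
        have "y \<in> Gamma E v u"
          by (rule Gamma_intro[OF vy _ wyu]) (use l gdist_sym[of E u v] m eqs 0 ab l2 in auto)
        then have "1 \<le> (\<Sum>y\<in>Gamma E v u. p v y)"
          using member_le_sum[of y "Gamma E v u" "p v"] finG y by (auto simp: p_def)
        then show ?thesis using sn by linarith
      next
        case (Suc m)
        then obtain y where y: "(u,y) \<in> H" "(y,x) \<in> H ^^ m" using n1 relpow_Suc_D2 by metis
        have "walk_len E m y x" using Hwalk[OF PO] y by blast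
        then have wyv: "walk_len E (m + Suc n2) y v" using wxv by (rule walk_app)
        have uy: "{u,y} \<in> E" using y PO by auto
        have "y \<in> Gamma E u v"
          by (rule Gamma_intro[OF uy l wyv]) (use Suc eqs ab l2 in auto)
        then have "1 \<le> (\<Sum>y\<in>Gamma E u v. p u y)"
          using member_le_sum[of y "Gamma E u v" "p u"] finG y by (auto simp: p_def)
        then show ?thesis using sn by linarith
      qed
    qed
  qed
qed

end
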